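(* Letting \begin{align*} \mathsf{D} & = \gamma_2 \mathsf{C_2^T W^{-1}}\bigl(\mathsf{I}_\ell-\bigl(\mathsf{I}_\ell+\gamma_1 \mathsf{C A^{-1} C^T W^{-1}}\bigr)^{-1}\bigr), \\ \mathsf{E} & = \mathsf{C_2 A_{22}^{-1}}, \\ \mathsf{G} & = \mathsf{I}_\ell - \gamma_1 \mathsf{C_2 A_{22}^{-1} C_2^T W^{-1}}, \\ \mathsf{F} & = \bigl(\mathsf{I}_\ell + \gamma_1 \mathsf{C A^{-1} C^T W^{-1}}\bigr)^{-1}, \end{align*} the right-preconditioned matrix can be written as: \begin{equation*} \mathcal{A}_{\gamma_1,\gamma_2} \widetilde{\mathcal{P}}_{\gamma_1,\gamma_2}^{-1} = \begin{bmatrix} \mathsf{I}_n & 0 & 0 \\ \mathsf{A_{21} A_{11}^{-1}} & \mathsf{I}_m-\mathsf{DE} & \mathsf{DG}\left(\frac{1}{\gamma_1}\mathsf{W}\right)\hat{\mathsf{S}}^{-1} \\ \mathsf{C A_{11}^{-1}} & -\mathsf{FE} & \left(\mathsf{I}_\ell-\mathsf{FG}\right) \left(-\frac{1}{\gamma_1}\mathsf{W}\right)\hat{\mathsf{S}}^{-1} \end{bmatrix}. \end{equation*}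
   Context: Let $\mathsf{A}\in\mathbb{R}^{n\times n}$ be symmetric positive definite, $\mathsf{A_2}\in\mathbb{R}^{m\times m}$ symmetric positive semidefinite with $\ker(\mathsf{A_2})=\operatorname{span}\{\mathsf{1}\}$, $\mathsf{C}\in\mathbb{R}^{\ell\times n}$ of full row rank, $\mathsf{C_2}\in\mathbb{R}^{\ell\times m}$ with $\mathsf{1}\notin\ker(\mathsf{C_2})$, $\mathsf{W}\in\mathbb{R}^{\ell\times\ell}$ symmetric positive definite, $\gamma_1,\gamma_2>0$, and $\hat{\mathsf{S}}\in\mathbb{R}^{\ell\times\ell}$ invertible. Define $\mathsf{A_{11}}=\mathsf{A}+\gamma_1\mathsf{C^TW^{-1}C}$, $\mathsf{A_{12}}=-\gamma_1\mathsf{C^TW^{-1}C_2}$, $\mathsf{A_{21}}=-\gamma_2\mathsf{C_2^TW^{-1}C}$, $\mathsf{A_{22}}=\mathsf{A_2}+\gamma_2\mathsf{C_2^TW^{-1}C_2}$ (so $\mathsf{A_{11}}$ and $\mathsf{A_{22}}$ are invertible), the augmented matrix $\mathcal{A}_{\gamma_1,\gamma_2}=\begin{bmatrix}\mathsf{A_{11}}&\mathsf{A_{12}}&\mathsf{C^T}\\ \mathsf{A_{21}}&\mathsf{A_{22}}&-\mathsf{C_2^T}\\ \mathsf{C}&-\mathsf{C_2}&0\end{bmatrix}$ and the modified augmented Lagrangian preconditioner $\widetilde{\mathcal{P}}_{\gamma_1,\gamma_2}=\begin{bmatrix}\mathsf{A_{11}}&\mathsf{A_{12}}&\mathsf{C^T}\\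 0&\mathsf{A_{22}}&-\mathsf{C_2^T}\\ 0&0&\hat{\mathsf{S}}\end{bmatrix}$. *)

theory Defs
  imports "HOL-Analysis.Analysis"
begin

definition sym_pos_def :: "real^'n^'n \<Rightarrow> bool" where
  "sym_pos_def M \<longleftrightarrow> transpose M = M \<and> (\<forall>x. x \<noteq> 0 \<longrightarrow> x \<bullet> (M *v x) > 0)"

definition sym_pos_semidef :: "real^'n^'n \<Rightarrow> bool" where
  "sym_pos_semidef M \<longleftrightarrow> transpose M = M \<and> (\<forall>x. x \<bullet> (M *v x) \<ge> 0)"

definition mat_ker :: "real^'c^'r \<Rightarrow> (real^'c) set" where
  "mat_ker M = {x. M *v x = 0}"

definition block3 ::
  "real^'c1^'r1 \<Rightarrow> real^'c2^'r1 \<Rightarrow> real^'c3^'r1 \<Rightarrow>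
   real^'c1^'r2 \<Rightarrow> real^'c2^'r2 \<Rightarrow> real^'c3^'r2 \<Rightarrow>
   real^'c1^'r3 \<Rightarrow> real^'c2^'r3 \<Rightarrow> real^'c3^'r3 \<Rightarrow>
   real^(('c1 + 'c2) + 'c3)^(('r1 + 'r2) + 'r3)" where
  "block3 M11 M12 M13 M21 M22 M23 M31 M32 M33 =
    (\<chi> i j. (case i of
        Inl (Inl a) \<Rightarrow> (case j of Inl (Inl b) \<Rightarrow> M11$a$b | Inl (Inr b) \<Rightarrow> M12$a$b | Inr b \<Rightarrow> M13$a$b)
      | Inl (Inr a) \<Rightarrow> (case j of Inl (Inl b) \<Rightarrow> M21$a$b | Inl (Inr b) \<Rightarrow> M22$a$b | Inr b \<Rightarrow> M23$a$b)
      | Inr a \<Rightarrow> (case j of Inl (Inl b) \<Rightarrow> M31$a$b | Inl (Inr b) \<Rightarrow> M32$a$b | Inr b \<Rightarrow> M33$a$b)))"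

end

theory Submission imports Defs begin
lemma sum_UNIV_Plus:
  "sum f (UNIV :: ('a::finite + 'b::finite) set) = sum (f o Inl) UNIV + sum (f o Inr) UNIV"
  by (subst UNIV_Plus_UNIV[symmetric], rule sum.Plus) auto

lemma block3_mult:
  "block3 X11 X12 X13 X21 X22 X23 X31 X32 X33 ** block3 Y11 Y12 Y13 Y21 Y22 Y23 Y31 Y32 Y33 =
   block3 (X11**Y11 + X12**Y21 + X13**Y31) (X11**Y12 + X12**Y22 + X13**Y32) (X11**Y13 + X12**Y23 + X13**Y33)
          (X21**Y11 + X22**Y21 + X23**Y31) (X21**Y12 + X22**Y22 + X23**Y32) (X21**Y13 + X22**Y23 + X23**Y33)
          (X31**Y11 + X32**Y21 + X33**Y31) (X31**Y12 + X32**Y22 + X33**Y32) (X31**Y13 + X32**Y23 + X33**Y33)"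
  unfolding vec_eq_iff
  by (auto simp: matrix_matrix_mult_def block3_def sum_UNIV_Plus o_def split: sum.splits)

lemma block3_mat1: "(mat 1 :: real^(('a::finite+'b::finite)+'c::finite)^(('a+'b)+'c)) = block3 (mat 1) 0 0 0 (mat 1) 0 0 0 (mat 1)"
  unfolding vec_eq_iff by (auto simp: mat_def block3_def split: sum.splits)

lemma mm_radd: "((A::real^'n^'m) + B) ** (C::real^'p^'n) = A ** C + B ** C"
  by (simp add: matrix_matrix_mult_def vec_eq_iff sum.distrib distrib_right)
lemma mm_rdiff: "((A::real^'n^'m) - B) ** (C::real^'p^'n) = A ** C - B ** C"
  by (simp add: matrix_matrix_mult_def vec_eq_iff sum_subtractf left_diff_distrib)
lemma mm_ldiff: "(A::real^'n^'m) ** ((B::real^'p^'n) - C) = A ** B - A ** C"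
  by (simp add: matrix_matrix_mult_def vec_eq_iff sum_subtractf right_diff_distrib)
lemma mm_rneg: "(- (A::real^'n^'m)) ** (C::real^'p^'n) = - (A ** C)"
  by (simp add: matrix_matrix_mult_def vec_eq_iff sum_negf)
lemma mm_lneg: "(A::real^'n^'m) ** (- (C::real^'p^'n)) = - (A ** C)"
  by (simp add: matrix_matrix_mult_def vec_eq_iff sum_negf)
lemma mm_lsc: "(k *\<^sub>R (A::real^'n^'m)) ** (C::real^'p^'n) = k *\<^sub>R (A ** C)"
  by (simp add: scalar_matrix_assoc)
lemma mm_rsc: "(A::real^'n^'m) ** (k *\<^sub>R (C::real^'p^'n)) = k *\<^sub>R (A ** C)"
  by (simp add: matrix_scalar_ac scalar_matrix_assoc)

lemma mv_sc: "(k *\<^sub>R (M::real^'n^'m)) *v x = k *\<^sub>R (M *v x)"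
  by (simp add: matrix_vector_mult_def vec_eq_iff sum_distrib_left mult.assoc)

lemma block3_cong:
  "a1 = b1 \<Longrightarrow> a2 = b2 \<Longrightarrow> a3 = b3 \<Longrightarrow> a4 = b4 \<Longrightarrow> a5 = b5 \<Longrightarrow> a6 = b6 \<Longrightarrow>
   a7 = b7 \<Longrightarrow> a8 = b8 \<Longrightarrow> a9 = b9 \<Longrightarrow>
   block3 a1 a2 a3 a4 a5 a6 a7 a8 a9 = block3 b1 b2 b3 b4 b5 b6 b7 b8 b9"
  by simp

lemmas mm_simps = mm_radd matrix_add_ldistrib mm_rdiff mm_ldiff mm_rneg mm_lneg mm_lsc mm_rsc
  matrix_mul_assoc[symmetric]

lemma inv_props:
  assumes "invertible (M::real^'n^'n)"
  shows "M ** matrix_inv M = mat 1" "matrix_inv M ** M = mat 1"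
proof -
  have "\<exists>A'. M ** A' = mat 1 \<and> A' ** M = mat 1" using assms invertible_def by blast
  from someI_ex[OF this] show "M ** matrix_inv M = mat 1" "matrix_inv M ** M = mat 1"
    unfolding matrix_inv_def by auto
qed

lemma inv_tail:
  assumes "invertible (M::real^'n^'n)"
  shows "M ** (matrix_inv M ** X) = X" "matrix_inv M ** (M ** X) = X"
  by (simp_all add: matrix_mul_assoc inv_props[OF assms])

lemma inv_of_ker:
  assumes "\<And>x. (M::real^'n^'n) *v x = 0 \<Longrightarrow> x = 0"
  shows "invertible M"
  using assms matrix_left_invertible_ker invertible_left_inverse by blast

lemma pd_inv:
  assumes "\<And>x. x \<noteq> 0 \<Longrightarrow> x \<bullet> ((M::real^'n^'n) *v x) > 0"
  shows "invertible M" "\<And>x. x \<noteq> 0 \<Longrightarrow> x \<bullet> (matrix_inv M *v x) > 0"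
proof -
  show inv: "invertible M"
    by (rule inv_of_ker) (metis assms inner_zero_right less_irrefl)
  fix x :: "real^'n" assume x: "x \<noteq> 0"
  define y where "y = matrix_inv M *v x"
  have xy: "x = M *v y" unfolding y_def matrix_vector_mul_assoc inv_props[OF inv] by simp
  have "y \<noteq> 0" using x xy by auto
  then have "y \<bullet> (M *v y) > 0" by (rule assms)
  then show "x \<bullet> (matrix_inv M *v x) > 0" by (simp add: xy[symmetric] y_def[symmetric] inner_commute)
qed

lemma quad_CT:
  "x \<bullet> ((transpose C ** M ** C) *v x) = (C *v x) \<bullet> (M *v (C *v (x::real^'n)))"
proof -
  have "x \<bullet> ((transpose C ** M ** C) *v x) = x \<bullet> (transpose C *v (M *v (C *v x)))"
    by (simp add: matrix_vector_mul_assoc matrix_mul_assoc)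
  also have "\<dots> = (M *v (C *v x)) \<bullet> (C *v x)"
    by (simp, metis inner_commute dot_lmul_matrix)
  finally show ?thesis by (simp add: inner_commute)
qed

lemma sym_inner:
  assumes "transpose M = M"
  shows "x \<bullet> ((M::real^'n^'n) *v y) = (M *v x) \<bullet> y"
  by (metis assms dot_lmul_matrix transpose_matrix_vector)

lemma psd_zero:
  assumes sym: "transpose M = M" and psd: "\<And>z. z \<bullet> ((M::real^'n^'n) *v z) \<ge> 0"
    and x0: "x \<bullet> (M *v x) = 0"
  shows "M *v x = 0"
proof (rule ccontr)
  define y where "y = M *v x"
  assume "M *v x \<noteq> 0"
  then have yy: "y \<bullet> y > 0" unfolding y_def by simp
  define q where "q = y \<bullet> (M *v y)"
  have q0: "q \<ge> 0" unfolding q_def by (rule psd)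
  define t where "t = (y \<bullet> y) / (q + 1)"
  have t0: "t > 0" unfolding t_def using yy q0 by simp
  have "(x - t *\<^sub>R y) \<bullet> (M *v (x - t *\<^sub>R y)) =
        x \<bullet> (M *v x) - t * (x \<bullet> (M *v y)) - t * (y \<bullet> (M *v x)) + t * t * q"
    unfolding q_def by (simp add: algebra_simps inner_diff_left inner_diff_right)
  also have "x \<bullet> (M *v y) = y \<bullet> y" using sym_inner[OF sym, of x y] y_def by (simp add: inner_commute)
  also have "y \<bullet> (M *v x) = y \<bullet> y" using y_def by simp
  finally have e: "(x - t *\<^sub>R y) \<bullet> (M *v (x - t *\<^sub>R y)) = t * (t * q - 2 * (y \<bullet> y))"
    using x0 by (simp add: algebra_simps)
  have "t * q < y \<bullet> y" unfolding t_def using yy q0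
    by (simp add: field_simps)
  then have "t * q - 2 * (y \<bullet> y) < 0" using yy by linarith
  then have "t * (t * q - 2 * (y \<bullet> y)) < 0" using t0 by (simp add: mult_pos_neg)
  with e psd[of "x - t *\<^sub>R y"] show False by simp
qed

theorem mainTheorem7:
  fixes A :: "real^'n^'n" and A2 :: "real^'m^'m"
    and C :: "real^'n^'l" and C2 :: "real^'m^'l"
    and W :: "real^'l^'l" and Shat :: "real^'l^'l"
    and \<gamma>1 \<gamma>2 :: real
  assumes A_spd: "sym_pos_def A"
    and A2_spsd: "sym_pos_semidef A2"
    and A2_ker: "mat_ker A2 = span {1 :: real^'m}"
    and C_full: "rank C = CARD('l)"
    and C2_one: "(1 :: real^'m) \<notin> mat_ker C2"
    and W_spd: "sym_pos_def W"
    and g1: "\<gamma>1 > 0" and g2: "\<gamma>2 > 0"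
    and S_inv: "invertible Shat"
  shows
   "let A11 = A + \<gamma>1 *\<^sub>R (transpose C ** matrix_inv W ** C);
        A12 = - (\<gamma>1 *\<^sub>R (transpose C ** matrix_inv W ** C2));
        A21 = - (\<gamma>2 *\<^sub>R (transpose C2 ** matrix_inv W ** C));
        A22 = A2 + \<gamma>2 *\<^sub>R (transpose C2 ** matrix_inv W ** C2);
        AA = block3 A11 A12 (transpose C) A21 A22 (- transpose C2) C (- C2) 0;
        PP = block3 A11 A12 (transpose C) 0 A22 (- transpose C2) 0 0 Shat;
        F = matrix_inv (mat 1 + \<gamma>1 *\<^sub>R (C ** matrix_inv A ** transpose C ** matrix_inv W));
        D = \<gamma>2 *\<^sub>R (transpose C2 ** matrix_inv W ** (mat 1 - F));
        E = C2 ** matrix_inv A22;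
        G = mat 1 - \<gamma>1 *\<^sub>R (C2 ** matrix_inv A22 ** transpose C2 ** matrix_inv W)
    in AA ** matrix_inv PP =
       block3 (mat 1) 0 0
              (A21 ** matrix_inv A11) (mat 1 - D ** E) (D ** G ** ((1 / \<gamma>1) *\<^sub>R W) ** matrix_inv Shat)
              (C ** matrix_inv A11) (- (F ** E)) ((mat 1 - F ** G) ** ((- 1 / \<gamma>1) *\<^sub>R W) ** matrix_inv Shat)"
proof -
  define Wi where "Wi = matrix_inv W"
  define Ai where "Ai = matrix_inv A"
  define A11 where "A11 = A + \<gamma>1 *\<^sub>R (transpose C ** Wi ** C)"
  define A12 where "A12 = - (\<gamma>1 *\<^sub>R (transpose C ** Wi ** C2))"
  define A21 where "A21 = - (\<gamma>2 *\<^sub>R (transpose C2 ** Wi ** C))"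
  define A22 where "A22 = A2 + \<gamma>2 *\<^sub>R (transpose C2 ** Wi ** C2)"
  define AA where "AA = block3 A11 A12 (transpose C) A21 A22 (- transpose C2) C (- C2) 0"
  define PP where "PP = block3 A11 A12 (transpose C) 0 A22 (- transpose C2) 0 0 Shat"
  define N where "N = mat 1 + \<gamma>1 *\<^sub>R (C ** Ai ** transpose C ** Wi)"
  define F where "F = matrix_inv N"
  define A11i where "A11i = matrix_inv A11"
  define A22i where "A22i = matrix_inv A22"
  define Si where "Si = matrix_inv Shat"
  define D where "D = \<gamma>2 *\<^sub>R (transpose C2 ** Wi ** (mat 1 - F))"
  define E where "E = C2 ** A22i"
  define G where "G = mat 1 - \<gamma>1 *\<^sub>R (C2 ** A22i ** transpose C2 ** Wi)"
  define R where "R = block3 (mat 1) 0 0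
              (A21 ** A11i) (mat 1 - D ** E) (D ** G ** ((1 / \<gamma>1) *\<^sub>R W) ** Si)
              (C ** A11i) (- (F ** E)) ((mat 1 - F ** G) ** ((- 1 / \<gamma>1) *\<^sub>R W) ** Si)"

  have Wpd: "\<And>x. x \<noteq> 0 \<Longrightarrow> x \<bullet> (W *v x) > 0" using W_spd sym_pos_def_def by blast
  have Apd: "\<And>x. x \<noteq> 0 \<Longrightarrow> x \<bullet> (A *v x) > 0" using A_spd sym_pos_def_def by blast
  have W_inv: "invertible W" by (rule pd_inv(1)[OF Wpd])
  have Wipd: "\<And>x. x \<noteq> 0 \<Longrightarrow> x \<bullet> (Wi *v x) > 0" unfolding Wi_def by (rule pd_inv(2)[OF Wpd])
  have Wipsd: "\<And>x. x \<bullet> (Wi *v x) \<ge> 0"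
    by (metis Wipd inner_zero_left less_eq_real_def order_refl)
  have A_inv: "invertible A" by (rule pd_inv(1)[OF Apd])
  have Aipd: "\<And>x. x \<noteq> 0 \<Longrightarrow> x \<bullet> (Ai *v x) > 0" unfolding Ai_def by (rule pd_inv(2)[OF Apd])
  have Aipsd: "\<And>x. x \<bullet> (Ai *v x) \<ge> 0"
    by (metis Aipd inner_zero_left less_eq_real_def order_refl)

  have A11_inv: "invertible A11"
  proof (rule inv_of_ker)
    fix x assume "A11 *v x = 0"
    then have "0 = x \<bullet> (A11 *v x)" by simp
    also have "\<dots> = x \<bullet> (A *v x) + \<gamma>1 * ((C *v x) \<bullet> (Wi *v (C *v x)))"
      unfolding A11_def by (simp add: matrix_vector_mult_add_rdistrib inner_add_right
         mv_sc quad_CT[symmetric])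
    finally have "x \<bullet> (A *v x) \<le> 0" using g1 Wipsd[of "C *v x"]
      by (smt (verit) mult_nonneg_nonneg)
    then show "x = 0" using Apd by force
  qed
  have A22_inv: "invertible A22"
  proof (rule inv_of_ker)
    fix x assume "A22 *v x = 0"
    then have "0 = x \<bullet> (A22 *v x)" by simp
    also have "\<dots> = x \<bullet> (A2 *v x) + \<gamma>2 * ((C2 *v x) \<bullet> (Wi *v (C2 *v x)))"
      unfolding A22_def by (simp add: matrix_vector_mult_add_rdistrib inner_add_right
         mv_sc quad_CT[symmetric])
    finally have e: "x \<bullet> (A2 *v x) + \<gamma>2 * ((C2 *v x) \<bullet> (Wi *v (C2 *v x))) = 0" by simp
    have p1: "x \<bullet> (A2 *v x) \<ge> 0" using A2_spsd sym_pos_semidef_def by blast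
    have p2: "(C2 *v x) \<bullet> (Wi *v (C2 *v x)) \<ge> 0" by (rule Wipsd)
    have z1: "x \<bullet> (A2 *v x) = 0" and z2: "(C2 *v x) \<bullet> (Wi *v (C2 *v x)) = 0"
      using e p1 p2 g2 by (smt (verit) mult_nonneg_nonneg mult_pos_pos)+
    have C2x: "C2 *v x = 0" using z2 Wipd by force
    have "A2 *v x = 0" using A2_spsd z1 psd_zero unfolding sym_pos_semidef_def by blast
    then have "x \<in> span {1}" using A2_ker unfolding mat_ker_def by blast
    then obtain c where xc: "x = c *\<^sub>R 1" by (auto simp: span_singleton)
    have "c *\<^sub>R (C2 *v 1) = 0" using C2x xc by (simp add: matrix_vector_mult_scaleR)
    moreover have "C2 *v 1 \<noteq> 0" using C2_one unfolding mat_ker_def by blast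
    ultimately have "c = 0" by simp
    then show "x = 0" using xc by simp
  qed
  have N_inv: "invertible N"
  proof (rule inv_of_ker)
    fix x assume Nx: "N *v x = 0"
    define y where "y = Wi *v x"
    have xy: "x = W *v y" unfolding y_def Wi_def matrix_vector_mul_assoc inv_props[OF W_inv] by simp
    have "N *v x = x + \<gamma>1 *\<^sub>R ((C ** Ai ** transpose C) *v (Wi *v x))"
      unfolding N_def by (simp add: matrix_vector_mult_add_rdistrib mv_sc
        matrix_vector_mul_assoc)
    then have "N *v x = W *v y + \<gamma>1 *\<^sub>R ((C ** Ai ** transpose C) *v y)"
      by (simp only: y_def[symmetric] xy[symmetric])
    then have "y \<bullet> (W *v y + \<gamma>1 *\<^sub>R ((C ** Ai ** transpose C) *v y)) = 0"
      using Nx by simp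
    then have "0 = y \<bullet> (W *v y) + \<gamma>1 * (y \<bullet> ((C ** Ai ** transpose C) *v y))"
      by (simp add: inner_add_right)
    moreover have "y \<bullet> ((C ** Ai ** transpose C) *v y) \<ge> 0"
      using quad_CT[of y "transpose C" Ai] Aipsd by simp
    ultimately have "y \<bullet> (W *v y) \<le> 0" using g1 by (smt (verit) mult_nonneg_nonneg)
    then have "y = 0" using Wpd by force
    then show "x = 0" using xy by simp
  qed
  note invs = inv_props[OF W_inv, folded Wi_def] inv_tail[OF W_inv, folded Wi_def]
    inv_props[OF A_inv, folded Ai_def] inv_tail[OF A_inv, folded Ai_def]
    inv_props[OF A11_inv, folded A11i_def] inv_tail[OF A11_inv, folded A11i_def]
    inv_props[OF A22_inv, folded A22i_def] inv_tail[OF A22_inv, folded A22i_def]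
    inv_props[OF N_inv, folded F_def] inv_tail[OF N_inv, folded F_def]
    inv_props[OF S_inv, folded Si_def] inv_tail[OF S_inv, folded Si_def]
  have h1: "A11 ** (Ai ** (transpose C ** Wi)) = transpose C ** (Wi ** N)"
    unfolding A11_def N_def by (simp add: mm_simps invs)
  have h2: "Ai ** (transpose C ** Wi) = A11i ** (transpose C ** (Wi ** N))"
    using arg_cong[OF h1, of "\<lambda>M. A11i ** M"] by (simp add: mm_simps invs)
  have h3: "C ** (Ai ** (transpose C ** (Wi ** F))) = C ** (A11i ** (transpose C ** Wi))"
    using arg_cong[OF h2, of "\<lambda>M. C ** M ** F"] by (simp add: mm_simps invs)
  have h5: "\<gamma>1 *\<^sub>R (C ** (A11i ** (transpose C ** Wi))) = mat 1 - F"
  proof -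
    have "mat 1 - F = (N - mat 1) ** F" by (simp add: mm_simps invs)
    also have "\<dots> = \<gamma>1 *\<^sub>R (C ** (Ai ** (transpose C ** (Wi ** F))))"
      unfolding N_def by (simp add: mm_simps)
    finally show ?thesis using h3 by simp
  qed
  have key0: "C ** (A11i ** transpose C) = (1/\<gamma>1) *\<^sub>R (W - F ** W)"
    using arg_cong[OF h5, of "\<lambda>M. (1/\<gamma>1) *\<^sub>R (M ** W)"] g1 by (simp add: mm_simps invs)
  have keyT: "C ** (A11i ** (transpose C ** X)) = (1/\<gamma>1) *\<^sub>R (W ** X - F ** (W ** X))" for X :: "real^'k^'l"
    using arg_cong[OF key0, of "\<lambda>M. M ** X"] by (simp add: mm_simps)
  have RPP: "R ** PP = AA"
    unfolding R_def PP_def AA_def block3_mult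
    apply (rule block3_cong)
    subgoal by simp
    subgoal by simp
    subgoal by simp
    subgoal by (simp add: mm_simps invs)
    subgoal using g1 by (simp add: mm_simps invs A12_def A21_def D_def E_def keyT key0)
    subgoal using g1 by (simp add: mm_simps invs A12_def A21_def D_def E_def G_def keyT key0 algebra_simps)
    subgoal by (simp add: mm_simps invs)
    subgoal using g1 by (simp add: mm_simps invs A12_def A21_def D_def E_def keyT key0)
    subgoal using g1 by (simp add: mm_simps invs A12_def A21_def D_def E_def G_def keyT key0 algebra_simps)
    done
  define Y where "Y = block3 A11i (- (A11i ** A12 ** A22i)) (- (A11i ** (A12 ** A22i ** transpose C2 ** Si + transpose C ** Si)))
     0 A22i (A22i ** transpose C2 ** Si) 0 0 Si"
  have "PP ** Y = mat 1"
    unfolding PP_def Y_def block3_mult block3_mat1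
    by (rule block3_cong) (simp_all add: mm_simps invs)
  then have PP_inv: "invertible PP" using invertible_right_inverse by blast
  have main: "AA ** matrix_inv PP = R"
    by (simp add: RPP[symmetric] matrix_mul_assoc[symmetric] inv_props[OF PP_inv])
  show ?thesis using main
    unfolding Let_def R_def AA_def PP_def G_def E_def D_def F_def N_def Si_def A22i_def A11i_def
      A22_def A21_def A12_def A11_def Ai_def Wi_def .
qed
end
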